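(* Let $\mathbf{A}=\langle A,\wedge,\vee,\cdot,1,0,{\sim},-,'\rangle$ be a quasi relation algebra. The set $C=\{a\in A\mid {\sim}a=-a\}$ is a subuniverse of $\mathbf{A}$ (closed under $\wedge,\vee,\cdot,{\sim},-,'$ and containing $0,1$), and the resulting subalgebra is a cyclic quasi relation algebra.
   Context: An FL-algebra $\langle A,\wedge,\vee,\cdot,1,\backslash,/,0\rangle$ is a residuated lattice (a lattice $\langle A,\wedge,\vee\rangle$, a monoid $\langle A,\cdot,1\rangle$, with $a\cdot b\le c \iff a\le c/b\iff b\le a\backslash c$) together with an arbitrary constant $0$. Define ${\sim}a=a\backslash 0$, $-a=0/a$ and $a+b={\sim}(-b\cdot -a)$. It is an InFL-algebra if ${\sim}{-}a={-}{\sim}a=a$ for all $a$. A quasi relation algebra (qRA) is an InFL-algebra with a unary operation $'$ such that for all $a,b$: $a''=a$, $(a\vee b)'=a'\wedge b'$, $({\sim}a)'=-(a')$, and $(a\cdot b)'=a'+b'$; it is written in the signature $\langle A,\wedge,\vee,\cdot,1,0,{\sim},-,'\rangle$. A qRA is cyclic if ${\sim}a=-a$ for all $a$. *)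

theory Defs
  imports Main
begin

text \<open>Algebras are given by a carrier set A and operations (total functions, relativised
  to A).  The lattice order is a \<le> b iff a \<and> b = a.\<close>

definition lattice_on :: "'a set \<Rightarrow> ('a \<Rightarrow> 'a \<Rightarrow> 'a) \<Rightarrow> ('a \<Rightarrow> 'a \<Rightarrow> 'a) \<Rightarrow> bool" where
  "lattice_on A meet join \<longleftrightarrow>
     (\<forall>a\<in>A. \<forall>b\<in>A. meet a b \<in> A \<and> join a b \<in> A) \<and>
     (\<forall>a\<in>A. \<forall>b\<in>A. \<forall>c\<in>A. meet (meet a b) c = meet a (meet b c) \<and> join (join a b) c = join a (join b c)) \<and>
     (\<forall>a\<in>A. \<forall>b\<in>A. meet a b = meet b a \<and> join a b = join b a) \<and>
     (\<forall>a\<in>A. meet a a = a \<and> join a a = a) \<and>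
     (\<forall>a\<in>A. \<forall>b\<in>A. meet a (join a b) = a \<and> join a (meet a b) = a)"

definition leq :: "('a \<Rightarrow> 'a \<Rightarrow> 'a) \<Rightarrow> 'a \<Rightarrow> 'a \<Rightarrow> bool" where
  "leq meet a b \<longleftrightarrow> meet a b = a"

definition monoid_on :: "'a set \<Rightarrow> ('a \<Rightarrow> 'a \<Rightarrow> 'a) \<Rightarrow> 'a \<Rightarrow> bool" where
  "monoid_on A mult one \<longleftrightarrow> one \<in> A \<and>
     (\<forall>a\<in>A. \<forall>b\<in>A. mult a b \<in> A) \<and>
     (\<forall>a\<in>A. \<forall>b\<in>A. \<forall>c\<in>A. mult (mult a b) c = mult a (mult b c)) \<and>
     (\<forall>a\<in>A. mult one a = a \<and> mult a one = a)"

text \<open>FL-algebra \<langle>A,\<and>,\<or>,\<cdot>,1,\<setminus>,/,0\<rangle>; ldiv a c = a\<setminus>c, rdiv c b = c/b.\<close>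
definition fl_algebra :: "'a set \<Rightarrow> ('a \<Rightarrow> 'a \<Rightarrow> 'a) \<Rightarrow> ('a \<Rightarrow> 'a \<Rightarrow> 'a) \<Rightarrow> ('a \<Rightarrow> 'a \<Rightarrow> 'a) \<Rightarrow> 'a
    \<Rightarrow> ('a \<Rightarrow> 'a \<Rightarrow> 'a) \<Rightarrow> ('a \<Rightarrow> 'a \<Rightarrow> 'a) \<Rightarrow> 'a \<Rightarrow> bool" where
  "fl_algebra A meet join mult one ldiv rdiv zero \<longleftrightarrow>
     lattice_on A meet join \<and> monoid_on A mult one \<and> zero \<in> A \<and>
     (\<forall>a\<in>A. \<forall>b\<in>A. ldiv a b \<in> A \<and> rdiv a b \<in> A) \<and>
     (\<forall>a\<in>A. \<forall>b\<in>A. \<forall>c\<in>A.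
        (leq meet (mult a b) c \<longleftrightarrow> leq meet a (rdiv c b)) \<and>
        (leq meet a (rdiv c b) \<longleftrightarrow> leq meet b (ldiv a c)))"

definition infl_algebra :: "'a set \<Rightarrow> ('a \<Rightarrow> 'a \<Rightarrow> 'a) \<Rightarrow> ('a \<Rightarrow> 'a \<Rightarrow> 'a) \<Rightarrow> ('a \<Rightarrow> 'a \<Rightarrow> 'a) \<Rightarrow> 'a
    \<Rightarrow> ('a \<Rightarrow> 'a \<Rightarrow> 'a) \<Rightarrow> ('a \<Rightarrow> 'a \<Rightarrow> 'a) \<Rightarrow> 'a \<Rightarrow> bool" where
  "infl_algebra A meet join mult one ldiv rdiv zero \<longleftrightarrow>
     fl_algebra A meet join mult one ldiv rdiv zero \<and>
     (\<forall>a\<in>A. ldiv (rdiv zero a) zero = a \<and> rdiv zero (ldiv a zero) = a)"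

definition qplus :: "('a \<Rightarrow> 'a \<Rightarrow> 'a) \<Rightarrow> ('a \<Rightarrow> 'a) \<Rightarrow> ('a \<Rightarrow> 'a) \<Rightarrow> 'a \<Rightarrow> 'a \<Rightarrow> 'a" where
  "qplus mult lneg rneg a b = lneg (mult (rneg b) (rneg a))"

text \<open>Quasi relation algebra in the signature \<langle>A,\<and>,\<or>,\<cdot>,1,0,\<sim>,\<dash>,'\<rangle>: the reduct is an InFL-algebra,
  i.e. there are residuals \<setminus>, / making it one with \<sim>a = a\<setminus>0 and \<dash>a = 0/a (the residuals are
  uniquely determined by the lattice order and \<cdot>), plus the axioms for '.\<close>
definition qra :: "'a set \<Rightarrow> ('a \<Rightarrow> 'a \<Rightarrow> 'a) \<Rightarrow> ('a \<Rightarrow> 'a \<Rightarrow> 'a) \<Rightarrow> ('a \<Rightarrow> 'a \<Rightarrow> 'a) \<Rightarrow> 'a \<Rightarrow> 'a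
    \<Rightarrow> ('a \<Rightarrow> 'a) \<Rightarrow> ('a \<Rightarrow> 'a) \<Rightarrow> ('a \<Rightarrow> 'a) \<Rightarrow> bool" where
  "qra A meet join mult one zero lneg rneg pr \<longleftrightarrow>
     (\<exists>ldiv rdiv. infl_algebra A meet join mult one ldiv rdiv zero \<and>
        (\<forall>a\<in>A. lneg a = ldiv a zero \<and> rneg a = rdiv zero a)) \<and>
     (\<forall>a\<in>A. pr a \<in> A) \<and>
     (\<forall>a\<in>A. pr (pr a) = a) \<and>
     (\<forall>a\<in>A. \<forall>b\<in>A. pr (join a b) = meet (pr a) (pr b)) \<and>
     (\<forall>a\<in>A. pr (lneg a) = rneg (pr a)) \<and>
     (\<forall>a\<in>A. \<forall>b\<in>A. pr (mult a b) = qplus mult lneg rneg (pr a) (pr b))"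

definition cyclic_qra :: "'a set \<Rightarrow> ('a \<Rightarrow> 'a \<Rightarrow> 'a) \<Rightarrow> ('a \<Rightarrow> 'a \<Rightarrow> 'a) \<Rightarrow> ('a \<Rightarrow> 'a \<Rightarrow> 'a) \<Rightarrow> 'a \<Rightarrow> 'a
    \<Rightarrow> ('a \<Rightarrow> 'a) \<Rightarrow> ('a \<Rightarrow> 'a) \<Rightarrow> ('a \<Rightarrow> 'a) \<Rightarrow> bool" where
  "cyclic_qra A meet join mult one zero lneg rneg pr \<longleftrightarrow>
     qra A meet join mult one zero lneg rneg pr \<and> (\<forall>a\<in>A. lneg a = rneg a)"

definition subuniverse :: "'a set \<Rightarrow> 'a set \<Rightarrow> ('a \<Rightarrow> 'a \<Rightarrow> 'a) \<Rightarrow> ('a \<Rightarrow> 'a \<Rightarrow> 'a) \<Rightarrow> ('a \<Rightarrow> 'a \<Rightarrow> 'a)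
    \<Rightarrow> 'a \<Rightarrow> 'a \<Rightarrow> ('a \<Rightarrow> 'a) \<Rightarrow> ('a \<Rightarrow> 'a) \<Rightarrow> ('a \<Rightarrow> 'a) \<Rightarrow> bool" where
  "subuniverse C A meet join mult one zero lneg rneg pr \<longleftrightarrow>
     C \<subseteq> A \<and> one \<in> C \<and> zero \<in> C \<and>
     (\<forall>a\<in>C. \<forall>b\<in>C. meet a b \<in> C \<and> join a b \<in> C \<and> mult a b \<in> C) \<and>
     (\<forall>a\<in>C. lneg a \<in> C \<and> rneg a \<in> C \<and> pr a \<in> C)"

end

theory Submission
  imports Defs
begin

locale qctx =
  fixes A :: "'a set" and meet join mult :: "'a \<Rightarrow> 'a \<Rightarrow> 'a" and one zero :: 'a
    and ldiv rdiv :: "'a \<Rightarrow> 'a \<Rightarrow> 'a" and lneg rneg :: "'a \<Rightarrow> 'a"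
  assumes infl: "infl_algebra A meet join mult one ldiv rdiv zero"
    and negs: "\<forall>a\<in>A. lneg a = ldiv a zero \<and> rneg a = rdiv zero a"
begin

lemma fl: "fl_algebra A meet join mult one ldiv rdiv zero"
  using infl unfolding infl_algebra_def by blast
lemma lat: "lattice_on A meet join" using fl unfolding fl_algebra_def by blast
lemma mon: "monoid_on A mult one" using fl unfolding fl_algebra_def by blast

lemma meetA[simp]: "a \<in> A \<Longrightarrow> b \<in> A \<Longrightarrow> meet a b \<in> A" using lat unfolding lattice_on_def by blast
lemma joinA[simp]: "a \<in> A \<Longrightarrow> b \<in> A \<Longrightarrow> join a b \<in> A" using lat unfolding lattice_on_def by blast
lemma multA[simp]: "a \<in> A \<Longrightarrow> b \<in> A \<Longrightarrow> mult a b \<in> A" using mon unfolding monoid_on_def by blast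
lemma oneA[simp]: "one \<in> A" using mon unfolding monoid_on_def by blast
lemma zeroA[simp]: "zero \<in> A" using fl unfolding fl_algebra_def by blast
lemma ldivA[simp]: "a \<in> A \<Longrightarrow> b \<in> A \<Longrightarrow> ldiv a b \<in> A" using fl unfolding fl_algebra_def by blast
lemma rdivA[simp]: "a \<in> A \<Longrightarrow> b \<in> A \<Longrightarrow> rdiv a b \<in> A" using fl unfolding fl_algebra_def by blast
lemma lneg_def': "a \<in> A \<Longrightarrow> lneg a = ldiv a zero" using negs by blast
lemma rneg_def': "a \<in> A \<Longrightarrow> rneg a = rdiv zero a" using negs by blast
lemma lnegA[simp]: "a \<in> A \<Longrightarrow> lneg a \<in> A" using lneg_def' by simp
lemma rnegA[simp]: "a \<in> A \<Longrightarrow> rneg a \<in> A" using rneg_def' by simp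

lemma massoc: "a \<in> A \<Longrightarrow> b \<in> A \<Longrightarrow> c \<in> A \<Longrightarrow> mult (mult a b) c = mult a (mult b c)"
  using mon unfolding monoid_on_def by blast
lemma one_l[simp]: "a \<in> A \<Longrightarrow> mult one a = a" using mon unfolding monoid_on_def by blast

lemma res1: "a \<in> A \<Longrightarrow> b \<in> A \<Longrightarrow> c \<in> A \<Longrightarrow> leq meet (mult a b) c \<longleftrightarrow> leq meet a (rdiv c b)"
  using fl unfolding fl_algebra_def by blast
lemma res2: "a \<in> A \<Longrightarrow> b \<in> A \<Longrightarrow> c \<in> A \<Longrightarrow> leq meet (mult a b) c \<longleftrightarrow> leq meet b (ldiv a c)"
  using fl unfolding fl_algebra_def by blast

lemma lr[simp]: "a \<in> A \<Longrightarrow> lneg (rneg a) = a"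
  using infl lneg_def' rneg_def' unfolding infl_algebra_def by simp
lemma rl[simp]: "a \<in> A \<Longrightarrow> rneg (lneg a) = a"
  using infl lneg_def' rneg_def' unfolding infl_algebra_def by simp

lemma m_assoc: "a \<in> A \<Longrightarrow> b \<in> A \<Longrightarrow> c \<in> A \<Longrightarrow> meet (meet a b) c = meet a (meet b c)"
  using lat unfolding lattice_on_def by blast
lemma j_assoc: "a \<in> A \<Longrightarrow> b \<in> A \<Longrightarrow> c \<in> A \<Longrightarrow> join (join a b) c = join a (join b c)"
  using lat unfolding lattice_on_def by blast
lemma m_comm: "a \<in> A \<Longrightarrow> b \<in> A \<Longrightarrow> meet a b = meet b a"
  using lat unfolding lattice_on_def by blast
lemma j_comm: "a \<in> A \<Longrightarrow> b \<in> A \<Longrightarrow> join a b = join b a"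
  using lat unfolding lattice_on_def by blast
lemma m_idem: "a \<in> A \<Longrightarrow> meet a a = a"
  using lat unfolding lattice_on_def by blast
lemma abs1: "a \<in> A \<Longrightarrow> b \<in> A \<Longrightarrow> meet a (join a b) = a"
  using lat unfolding lattice_on_def by blast
lemma abs2: "a \<in> A \<Longrightarrow> b \<in> A \<Longrightarrow> join a (meet a b) = a"
  using lat unfolding lattice_on_def by blast

lemma antisym: "a \<in> A \<Longrightarrow> b \<in> A \<Longrightarrow> leq meet a b \<Longrightarrow> leq meet b a \<Longrightarrow> a = b"
  unfolding leq_def by (metis m_comm)
lemma refl: "a \<in> A \<Longrightarrow> leq meet a a"
  unfolding leq_def by (rule m_idem)
lemma ext: "x \<in> A \<Longrightarrow> y \<in> A \<Longrightarrow> (\<And>z. z \<in> A \<Longrightarrow> leq meet z x \<longleftrightarrow> leq meet z y) \<Longrightarrow> x = y"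
  using antisym refl by metis

lemma le_trans: "a \<in> A \<Longrightarrow> b \<in> A \<Longrightarrow> c \<in> A \<Longrightarrow> leq meet a b \<Longrightarrow> leq meet b c \<Longrightarrow> leq meet a c"
  unfolding leq_def by (metis m_assoc)

lemma ml1: "a \<in> A \<Longrightarrow> b \<in> A \<Longrightarrow> leq meet (meet a b) a"
proof -
  assume h: "a \<in> A" "b \<in> A"
  have "meet (meet a b) a = meet (meet b a) a" using h m_comm by simp
  also have "\<dots> = meet b (meet a a)" using h m_assoc by simp
  also have "\<dots> = meet a b" using h m_idem m_comm by simp
  finally show ?thesis unfolding leq_def .
qed
lemma ml2: "a \<in> A \<Longrightarrow> b \<in> A \<Longrightarrow> leq meet (meet a b) b"
  unfolding leq_def by (metis m_assoc m_idem)

lemma meet_le: "z \<in> A \<Longrightarrow> a \<in> A \<Longrightarrow> b \<in> A \<Longrightarrow> leq meet z (meet a b) \<longleftrightarrow> leq meet z a \<and> leq meet z b"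
proof
  assume h: "z \<in> A" "a \<in> A" "b \<in> A" "leq meet z (meet a b)"
  then show "leq meet z a \<and> leq meet z b" using le_trans ml1 ml2 by (meson meetA)
next
  assume h: "z \<in> A" "a \<in> A" "b \<in> A" "leq meet z a \<and> leq meet z b"
  then have "meet z (meet a b) = meet (meet z a) b" using m_assoc by simp
  also have "\<dots> = z" using h unfolding leq_def by simp
  finally show "leq meet z (meet a b)" unfolding leq_def .
qed

lemma join_le: "c \<in> A \<Longrightarrow> a \<in> A \<Longrightarrow> b \<in> A \<Longrightarrow> leq meet (join a b) c \<longleftrightarrow> leq meet a c \<and> leq meet b c"
proof -
  assume A: "c \<in> A" "a \<in> A" "b \<in> A"
  have up1: "leq meet x (join x y)" if "x \<in> A" "y \<in> A" for x y
    unfolding leq_def using abs1 that by simp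
  have up2: "leq meet y (join x y)" if "x \<in> A" "y \<in> A" for x y
    unfolding leq_def using abs1[of y x] j_comm[of x y] that by simp
  have j: "join x y = y" if "x \<in> A" "y \<in> A" "leq meet x y" for x y
  proof -
    have "join x y = join (meet x y) y" using that unfolding leq_def by simp
    also have "\<dots> = join y (meet y x)" using that m_comm j_comm by simp
    also have "\<dots> = y" using that abs2 by simp
    finally show ?thesis .
  qed
  have jl: "leq meet x y" if "x \<in> A" "y \<in> A" "join x y = y" for x y
    unfolding leq_def using abs1[of x y] that by simp
  show ?thesis
  proof
    assume "leq meet (join a b) c" then show "leq meet a c \<and> leq meet b c"
      using up1 up2 le_trans A by (meson joinA)
  next
    assume h: "leq meet a c \<and> leq meet b c"
    have "join (join a b) c = join a (join b c)" using j_assoc A by simp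
    also have "\<dots> = c" using j h A by simp
    finally show "leq meet (join a b) c" using jl A by simp
  qed
qed

lemma L1: "x \<in> A \<Longrightarrow> y \<in> A \<Longrightarrow> leq meet x (lneg y) \<longleftrightarrow> leq meet (mult y x) zero"
  using res2 lneg_def' by simp
lemma L2: "x \<in> A \<Longrightarrow> y \<in> A \<Longrightarrow> leq meet y (rneg x) \<longleftrightarrow> leq meet (mult y x) zero"
  using res1 rneg_def' by simp
lemma gal: "x \<in> A \<Longrightarrow> y \<in> A \<Longrightarrow> leq meet x (lneg y) \<longleftrightarrow> leq meet y (rneg x)"
  using L1 L2 by simp

lemma lneg_join: "a \<in> A \<Longrightarrow> b \<in> A \<Longrightarrow> lneg (join a b) = meet (lneg a) (lneg b)"
  by (rule ext) (simp_all add: gal meet_le join_le)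
lemma rneg_join: "a \<in> A \<Longrightarrow> b \<in> A \<Longrightarrow> rneg (join a b) = meet (rneg a) (rneg b)"
  by (rule ext) (simp_all add: gal[symmetric] meet_le join_le)

lemma lneg_meet: "a \<in> A \<Longrightarrow> b \<in> A \<Longrightarrow> lneg (meet a b) = join (lneg a) (lneg b)"
proof -
  assume h: "a \<in> A" "b \<in> A"
  have "meet a b = rneg (join (lneg a) (lneg b))" using h by (simp add: rneg_join)
  then show ?thesis using h by simp
qed
lemma rneg_meet: "a \<in> A \<Longrightarrow> b \<in> A \<Longrightarrow> rneg (meet a b) = join (rneg a) (rneg b)"
proof -
  assume h: "a \<in> A" "b \<in> A"
  have "meet a b = lneg (join (rneg a) (rneg b))" using h by (simp add: lneg_join)
  then show ?thesis using h by simp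
qed

lemma cyc_iff: "x \<in> A \<Longrightarrow> lneg x = rneg x \<longleftrightarrow> (\<forall>z\<in>A. leq meet (mult x z) zero \<longleftrightarrow> leq meet (mult z x) zero)"
proof
  assume "x \<in> A" "lneg x = rneg x" then show "\<forall>z\<in>A. leq meet (mult x z) zero \<longleftrightarrow> leq meet (mult z x) zero"
    using L1 L2 by metis
next
  assume h: "x \<in> A" "\<forall>z\<in>A. leq meet (mult x z) zero \<longleftrightarrow> leq meet (mult z x) zero"
  show "lneg x = rneg x" by (rule ext) (use h L1 L2 in auto)
qed

lemma lneg_one: "lneg one = zero" by (rule ext) (simp_all add: L1)
lemma rneg_one: "rneg one = zero"
proof (rule ext)
  fix z assume "z \<in> A"
  have "leq meet (mult z one) zero \<longleftrightarrow> leq meet z zero"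
    using mon \<open>z \<in> A\<close> unfolding monoid_on_def by simp
  then show "leq meet z (rneg one) = leq meet z zero" using L2 \<open>z \<in> A\<close> by simp
qed simp_all
lemma lneg_zero: "lneg zero = one" using rneg_one lr[of one] by simp
lemma rneg_zero: "rneg zero = one" using lneg_one rl[of one] by simp

lemma ldiv_eq: "a \<in> A \<Longrightarrow> b \<in> A \<Longrightarrow> ldiv a b = lneg (mult (rneg b) a)"
proof (rule ext)
  fix z assume h: "a \<in> A" "b \<in> A" "z \<in> A"
  have "leq meet z (ldiv a b) \<longleftrightarrow> leq meet (mult a z) b" using res2 h by simp
  also have "\<dots> \<longleftrightarrow> leq meet (mult a z) (lneg (rneg b))" using h by simp
  also have "\<dots> \<longleftrightarrow> leq meet (mult (rneg b) (mult a z)) zero" using L1[of "mult a z" "rneg b"] h by simp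
  also have "\<dots> \<longleftrightarrow> leq meet (mult (mult (rneg b) a) z) zero" using massoc h by simp
  also have "\<dots> \<longleftrightarrow> leq meet z (lneg (mult (rneg b) a))" using L1 h by simp
  finally show "leq meet z (ldiv a b) \<longleftrightarrow> leq meet z (lneg (mult (rneg b) a))" .
qed simp_all

lemma rdiv_eq: "c \<in> A \<Longrightarrow> b \<in> A \<Longrightarrow> rdiv c b = rneg (mult b (lneg c))"
proof (rule ext)
  fix z assume h: "c \<in> A" "b \<in> A" "z \<in> A"
  have "leq meet z (rdiv c b) \<longleftrightarrow> leq meet (mult z b) c" using res1 h by simp
  also have "\<dots> \<longleftrightarrow> leq meet (mult z b) (rneg (lneg c))" using h by simp
  also have "\<dots> \<longleftrightarrow> leq meet (mult (mult z b) (lneg c)) zero" using L2[of "lneg c" "mult z b"] h by simp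
  also have "\<dots> \<longleftrightarrow> leq meet (mult z (mult b (lneg c))) zero" using massoc h by simp
  also have "\<dots> \<longleftrightarrow> leq meet z (rneg (mult b (lneg c)))" using L2 h by simp
  finally show "leq meet z (rdiv c b) \<longleftrightarrow> leq meet z (rneg (mult b (lneg c)))" .
qed simp_all

definition "CC = {a \<in> A. lneg a = rneg a}"

lemma CC_mult: "a \<in> CC \<Longrightarrow> b \<in> CC \<Longrightarrow> mult a b \<in> CC"
proof -
  assume a: "a \<in> CC" and b: "b \<in> CC"
  have aA: "a \<in> A" and bA: "b \<in> A" using a b unfolding CC_def by auto
  have ca: "\<forall>z\<in>A. leq meet (mult a z) zero \<longleftrightarrow> leq meet (mult z a) zero"
    using a cyc_iff aA unfolding CC_def by blast
  have cb: "\<forall>z\<in>A. leq meet (mult b z) zero \<longleftrightarrow> leq meet (mult z b) zero"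
    using b cyc_iff bA unfolding CC_def by blast
  have "\<forall>z\<in>A. leq meet (mult (mult a b) z) zero \<longleftrightarrow> leq meet (mult z (mult a b)) zero"
  proof
    fix z assume z: "z \<in> A"
    have "leq meet (mult (mult a b) z) zero \<longleftrightarrow> leq meet (mult a (mult b z)) zero"
      using massoc aA bA z by simp
    also have "\<dots> \<longleftrightarrow> leq meet (mult (mult b z) a) zero" using ca aA bA z by simp
    also have "\<dots> \<longleftrightarrow> leq meet (mult b (mult z a)) zero" using massoc aA bA z by simp
    also have "\<dots> \<longleftrightarrow> leq meet (mult (mult z a) b) zero" using cb aA bA z by simp
    also have "\<dots> \<longleftrightarrow> leq meet (mult z (mult a b)) zero" using massoc aA bA z by simp
    finally show "leq meet (mult (mult a b) z) zero \<longleftrightarrow> leq meet (mult z (mult a b)) zero" .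
  qed
  then show ?thesis using cyc_iff aA bA unfolding CC_def by simp
qed

lemma CC_join: "a \<in> CC \<Longrightarrow> b \<in> CC \<Longrightarrow> join a b \<in> CC"
  unfolding CC_def by (auto simp: lneg_join rneg_join)
lemma CC_meet: "a \<in> CC \<Longrightarrow> b \<in> CC \<Longrightarrow> meet a b \<in> CC"
  unfolding CC_def by (auto simp: lneg_meet rneg_meet)
lemma CC_lneg: "a \<in> CC \<Longrightarrow> lneg a \<in> CC"
proof -
  assume "a \<in> CC" then have a: "a \<in> A" "lneg a = rneg a" unfolding CC_def by auto
  have "lneg (lneg a) = lneg (rneg a)" by (simp only: a(2))
  also have "\<dots> = a" using a(1) by (rule lr)
  also have "\<dots> = rneg (lneg a)" using a(1) by (rule rl[symmetric])
  finally show ?thesis unfolding CC_def using a by simp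
qed
lemma CC_rneg: "a \<in> CC \<Longrightarrow> rneg a \<in> CC"
proof -
  assume "a \<in> CC" then have a: "a \<in> A" "lneg a = rneg a" unfolding CC_def by auto
  have "lneg (rneg a) = a" using a(1) by (rule lr)
  also have "\<dots> = rneg (lneg a)" using a(1) by (rule rl[symmetric])
  also have "\<dots> = rneg (rneg a)" by (simp only: a(2))
  finally show ?thesis unfolding CC_def using a by simp
qed
lemma CC_one: "one \<in> CC" unfolding CC_def by (simp add: lneg_one rneg_one)
lemma CC_zero: "zero \<in> CC" unfolding CC_def by (simp add: lneg_zero rneg_zero)
lemma CC_sub: "CC \<subseteq> A" unfolding CC_def by auto

lemma CC_ldiv: "a \<in> CC \<Longrightarrow> b \<in> CC \<Longrightarrow> ldiv a b \<in> CC"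
proof -
  assume h: "a \<in> CC" "b \<in> CC"
  then have "a \<in> A" "b \<in> A" using CC_sub by auto
  then have "ldiv a b = lneg (mult (rneg b) a)" by (rule ldiv_eq)
  moreover have "lneg (mult (rneg b) a) \<in> CC" using h by (intro CC_lneg CC_mult CC_rneg)
  ultimately show ?thesis by simp
qed
lemma CC_rdiv: "a \<in> CC \<Longrightarrow> b \<in> CC \<Longrightarrow> rdiv a b \<in> CC"
proof -
  assume h: "a \<in> CC" "b \<in> CC"
  then have "a \<in> A" "b \<in> A" using CC_sub by auto
  then have "rdiv a b = rneg (mult b (lneg a))" by (rule rdiv_eq)
  moreover have "rneg (mult b (lneg a)) \<in> CC" using h by (intro CC_rneg CC_mult CC_lneg)
  ultimately show ?thesis by simp
qed

lemma infl_CC: "infl_algebra CC meet join mult one ldiv rdiv zero"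
proof -
  have l: "lattice_on CC meet join"
  proof -
    have L: "(\<forall>a\<in>A. \<forall>b\<in>A. \<forall>c\<in>A. meet (meet a b) c = meet a (meet b c) \<and> join (join a b) c = join a (join b c))"
      "(\<forall>a\<in>A. \<forall>b\<in>A. meet a b = meet b a \<and> join a b = join b a)"
      "(\<forall>a\<in>A. meet a a = a \<and> join a a = a)"
      "(\<forall>a\<in>A. \<forall>b\<in>A. meet a (join a b) = a \<and> join a (meet a b) = a)"
      using lat unfolding lattice_on_def by blast+
    show ?thesis unfolding lattice_on_def
    proof (intro conjI ballI)
      fix a b c assume h: "a \<in> CC" "b \<in> CC" "c \<in> CC"
      then have "a \<in> A" "b \<in> A" "c \<in> A" using CC_sub by auto
      then show "meet (meet a b) c = meet a (meet b c)" "join (join a b) c = join a (join b c)"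
        using L(1) by auto
    next
      fix a b assume h: "a \<in> CC" "b \<in> CC"
      then show "meet a b \<in> CC" "join a b \<in> CC" using CC_meet CC_join by auto
      from h have "a \<in> A" "b \<in> A" using CC_sub by auto
      then show "meet a b = meet b a" "join a b = join b a"
        "meet a (join a b) = a" "join a (meet a b) = a" using L(2,4) by auto
    next
      fix a assume "a \<in> CC" then have "a \<in> A" using CC_sub by auto
      then show "meet a a = a" "join a a = a" using L(3) by auto
    qed
  qed
  have m: "monoid_on CC mult one"
    unfolding monoid_on_def
  proof (intro conjI ballI CC_one)
    fix a b c assume h: "a \<in> CC" "b \<in> CC" "c \<in> CC"
    then have "a \<in> A" "b \<in> A" "c \<in> A" using CC_sub by auto
    then show "mult (mult a b) c = mult a (mult b c)" using massoc by auto
  next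
    fix a b assume h: "a \<in> CC" "b \<in> CC" then show "mult a b \<in> CC" using CC_mult by auto
  next
    fix a assume "a \<in> CC" then have "a \<in> A" using CC_sub by auto
    then show "mult one a = a" "mult a one = a" using mon unfolding monoid_on_def by auto
  qed
  have f: "fl_algebra CC meet join mult one ldiv rdiv zero"
    unfolding fl_algebra_def
  proof (intro conjI l m CC_zero ballI)
    fix a b assume "a \<in> CC" "b \<in> CC" then show "ldiv a b \<in> CC" "rdiv a b \<in> CC"
      using CC_ldiv CC_rdiv by auto
  next
    fix a b c assume "a \<in> CC" "b \<in> CC" "c \<in> CC"
    then have "a \<in> A" "b \<in> A" "c \<in> A" using CC_sub by auto
    then show "leq meet (mult a b) c = leq meet a (rdiv c b)" "leq meet a (rdiv c b) = leq meet b (ldiv a c)"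
      using res1 res2 by auto
  qed
  have dn: "\<forall>a\<in>CC. ldiv (rdiv zero a) zero = a \<and> rdiv zero (ldiv a zero) = a"
  proof
    fix a assume "a \<in> CC" then have a: "a \<in> A" using CC_sub by auto
    have "ldiv (rdiv zero a) zero = lneg (rneg a)" using a by (simp add: lneg_def' rneg_def')
    moreover have "rdiv zero (ldiv a zero) = rneg (lneg a)" using a by (simp add: lneg_def' rneg_def')
    ultimately show "ldiv (rdiv zero a) zero = a \<and> rdiv zero (ldiv a zero) = a" using a by simp
  qed
  show ?thesis unfolding infl_algebra_def by (rule conjI[OF f dn])
qed

end

theorem proposition2p4:
  fixes A :: "'a set" and meet join mult :: "'a \<Rightarrow> 'a \<Rightarrow> 'a" and one zero :: 'a
    and lneg rneg pr :: "'a \<Rightarrow> 'a"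
  assumes "qra A meet join mult one zero lneg rneg pr"
  defines "C \<equiv> {a \<in> A. lneg a = rneg a}"
  shows "subuniverse C A meet join mult one zero lneg rneg pr \<and>
         cyclic_qra C meet join mult one zero lneg rneg pr"
proof -
  obtain ldiv rdiv where i: "infl_algebra A meet join mult one ldiv rdiv zero"
    and n: "\<forall>a\<in>A. lneg a = ldiv a zero \<and> rneg a = rdiv zero a"
    using assms(1) unfolding qra_def by blast
  interpret q: qctx A meet join mult one zero ldiv rdiv lneg rneg using i n by unfold_locales
  have CC: "q.CC = C" unfolding q.CC_def C_def by simp
  have prA: "\<forall>a\<in>A. pr a \<in> A" and prpr: "\<forall>a\<in>A. pr (pr a) = a"
    and prj: "\<forall>a\<in>A. \<forall>b\<in>A. pr (join a b) = meet (pr a) (pr b)"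
    and prl: "\<forall>a\<in>A. pr (lneg a) = rneg (pr a)"
    and prm: "\<forall>a\<in>A. \<forall>b\<in>A. pr (mult a b) = qplus mult lneg rneg (pr a) (pr b)"
    using assms(1) unfolding qra_def by blast+
  have prr: "pr (rneg b) = lneg (pr b)" if "b \<in> A" for b
  proof -
    have e: "pr (lneg (rneg b)) = rneg (pr (rneg b))" using prl q.rnegA[OF that] by blast
    have "pr b = rneg (pr (rneg b))" using e q.lr[OF that] by simp
    then have "lneg (pr b) = lneg (rneg (pr (rneg b)))" by simp
    then show ?thesis using that prA by simp
  qed
  have prC: "pr a \<in> C" if "a \<in> C" for a
  proof -
    have aA: "a \<in> A" and e: "lneg a = rneg a" using that unfolding C_def by auto
    have "rneg (pr a) = pr (lneg a)" using prl aA by simp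
    also have "\<dots> = pr (rneg a)" using e by simp
    also have "\<dots> = lneg (pr a)" using prr aA by simp
    finally show ?thesis using prA aA unfolding C_def by simp
  qed
  have CA: "C \<subseteq> A" using q.CC_sub CC by simp
  have sub: "subuniverse C A meet join mult one zero lneg rneg pr"
    unfolding subuniverse_def
  proof (intro conjI ballI CA)
    show "one \<in> C" "zero \<in> C" using q.CC_one q.CC_zero CC by auto
  next
    fix a b assume "a \<in> C" "b \<in> C"
    then show "meet a b \<in> C" "join a b \<in> C" "mult a b \<in> C"
      using q.CC_meet q.CC_join q.CC_mult CC by auto
  next
    fix a assume "a \<in> C"
    then show "lneg a \<in> C" "rneg a \<in> C" "pr a \<in> C"
      using q.CC_lneg q.CC_rneg prC CC by auto
  qed
  have ex: "\<exists>ldiv rdiv. infl_algebra C meet join mult one ldiv rdiv zero \<and>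
        (\<forall>a\<in>C. lneg a = ldiv a zero \<and> rneg a = rdiv zero a)"
    using q.infl_CC CC n CA by blast
  have "qra C meet join mult one zero lneg rneg pr"
    unfolding qra_def
  proof (intro conjI ex ballI)
    fix a assume a: "a \<in> C"
    then have aA: "a \<in> A" using CA by auto
    show "pr a \<in> C" using prC a by simp
    show "pr (pr a) = a" using prpr aA by simp
    show "pr (lneg a) = rneg (pr a)" using prl aA by simp
    fix b assume "b \<in> C"
    then have bA: "b \<in> A" using CA by auto
    show "pr (join a b) = meet (pr a) (pr b)" using prj aA bA by simp
    show "pr (mult a b) = qplus mult lneg rneg (pr a) (pr b)" using prm aA bA by simp
  qed
  then show ?thesis using sub unfolding cyclic_qra_def C_def by simp
qed

end
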